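(* Let $k\ge1$, $n\ge 2k$ and $0\le i\le n-2$ be integers. For $j\in\mathbb Z$ put \[ A_{i,j}=\binom{i}{\lceil i/2\rceil-j(n-k+2)}-\binom{i}{\lfloor (i+n-k)/2\rfloor+1-j(n-k+2)}, \] \[ B_{i,j}=\binom{i}{\lceil i/2\rceil-j(n-k+1)}-\binom{i}{\lfloor (i+n-k-1)/2\rfloor+1-j(n-k+1)}, \] \[ C_{i,j}=\binom{i}{\lceil i/2\rceil-j(n-k)}-\binom{i}{\lfloor (i+n-k-2)/2\rfloor+1-j(n-k)}. \] Then \[ \sum_{j\in\mathbb Z}\bigl(-A_{i,j}+2B_{i,j}-C_{i,j}\bigr) =\binom{i+1}{\lfloor\frac{i+n-k}{2}\rfloor+1}+\binom{i+1}{\lfloor\frac{i+n-k}{2}\rfloor-n+k} -2\left(\binom{i}{\lfloor\frac{i+n-k-1}{2}\rfloor+1}+\binom{i}{\lfloor\frac{i+n-k-1}{2}\rfloor-n+k}\right). \]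
   Context: Convention: $\binom{a}{b}=0$ if $b<0$ or $b>a$. *)

theory Defs
  imports "HOL-Analysis.Analysis"
begin

definition zbinom :: "nat \<Rightarrow> int \<Rightarrow> int" where
  "zbinom a b = (if b < 0 \<or> b > int a then 0 else int (a choose nat b))"

end

theory Submission
  imports Defs
begin

lemma zbinom_pascal: "zbinom (Suc a) b = zbinom a b + zbinom a (b - 1)"
proof -
  consider "b < 0" | "b = 0" | "b \<ge> 1 \<and> b \<le> int a + 1" | "b > int a + 1" by linarith
  then show ?thesis
  proof cases
    case 3
    then obtain t where t: "b = int t + 1" "t \<le> a"
      by (metis add.commute add_le_cancel_left nat_int nat_le_iff zle_iff_zadd)
    have "Suc a choose (Suc t) = (a choose t) + (a choose (Suc t))" by simp
    then show ?thesis using t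
      by (auto simp: zbinom_def nat_add_distrib binomial_eq_0 simp del: binomial_Suc_Suc)
  qed (auto simp: zbinom_def)
qed

lemma zbinom_out: "b < 0 \<or> b > int a \<Longrightarrow> zbinom a b = 0"
  by (auto simp: zbinom_def)

theorem mainTheorem10:
  fixes k n i :: nat
  assumes "k \<ge> 1" and "n \<ge> 2 * k" and "i \<le> n - 2"
  defines "A \<equiv> \<lambda>j::int. zbinom i (\<lceil>real i / 2\<rceil> - j * (int n - int k + 2))
              - zbinom i (\<lfloor>(real i + real n - real k) / 2\<rfloor> + 1 - j * (int n - int k + 2))"
      and "B \<equiv> \<lambda>j::int. zbinom i (\<lceil>real i / 2\<rceil> - j * (int n - int k + 1))
              - zbinom i (\<lfloor>(real i + real n - real k - 1) / 2\<rfloor> + 1 - j * (int n - int k + 1))"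
      and "C \<equiv> \<lambda>j::int. zbinom i (\<lceil>real i / 2\<rceil> - j * (int n - int k))
              - zbinom i (\<lfloor>(real i + real n - real k - 2) / 2\<rfloor> + 1 - j * (int n - int k))"
  shows "((\<lambda>j::int. real_of_int (- A j + 2 * B j - C j)) has_sum
           real_of_int (zbinom (i + 1) (\<lfloor>(real i + real n - real k) / 2\<rfloor> + 1)
             + zbinom (i + 1) (\<lfloor>(real i + real n - real k) / 2\<rfloor> - int n + int k)
             - 2 * (zbinom i (\<lfloor>(real i + real n - real k - 1) / 2\<rfloor> + 1)
                    + zbinom i (\<lfloor>(real i + real n - real k - 1) / 2\<rfloor> - int n + int k)))) UNIV"
proof -
  define m where "m = int n - int k"
  define c where "c = \<lceil>real i / 2\<rceil>"
  define F where "F = \<lfloor>(real i + real n - real k) / 2\<rfloor>"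
  define G where "G = \<lfloor>(real i + real n - real k - 1) / 2\<rfloor>"
  have im: "int i \<le> 2 * m - 2" "m \<ge> 1" using assms(1-3) unfolding m_def by auto
  have c1: "real i / 2 \<le> c" "c < real i / 2 + 1" unfolding c_def by linarith+
  have c2: "int i \<le> 2 * c" "2 * c \<le> int i + 1"
  proof -
    have "real i \<le> 2 * real_of_int c" using c1 by linarith
    then show "int i \<le> 2 * c" by linarith
    have "2 * real_of_int c < real i + 2" using c1 by linarith
    then show "2 * c \<le> int i + 1" by linarith
  qed
  have F1: "2 * F \<le> int i + m" "int i + m \<le> 2 * F + 1"
  proof -
    have a: "real_of_int F \<le> (real i + real n - real k) / 2"
      "(real i + real n - real k) / 2 < real_of_int F + 1" unfolding F_def by linarith+
    have "2 * real_of_int F \<le> real_of_int (int i + m)" using a(1) unfolding m_def by simp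
    then show "2 * F \<le> int i + m" by linarith
    have "real_of_int (int i + m) < 2 * real_of_int F + 2" using a(2) unfolding m_def by simp
    then show "int i + m \<le> 2 * F + 1" by linarith
  qed
  have G1: "2 * G \<le> int i + m - 1" "int i + m - 1 \<le> 2 * G + 1"
  proof -
    have a: "real_of_int G \<le> (real i + real n - real k - 1) / 2"
      "(real i + real n - real k - 1) / 2 < real_of_int G + 1" unfolding G_def by linarith+
    have "2 * real_of_int G \<le> real_of_int (int i + m - 1)" using a(1) unfolding m_def by simp
    then show "2 * G \<le> int i + m - 1" by linarith
    have "real_of_int (int i + m - 1) < 2 * real_of_int G + 2" using a(2) unfolding m_def by simp
    then show "int i + m - 1 \<le> 2 * G + 1" by linarith
  qed
  have H: "\<lfloor>(real i + real n - real k - 2) / 2\<rfloor> = F - 1"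
  proof -
    have "(real i + real n - real k - 2) / 2 = (real i + real n - real k) / 2 - 1"
      by (simp add: field_simps)
    then show ?thesis unfolding F_def by (metis floor_diff_one)
  qed
  have nk: "int n - int k + 2 = m + 2" "int n - int k + 1 = m + 1" "int n - int k = m"
    by (simp_all add: m_def)
  define T where "T = (\<lambda>j::int. - A j + 2 * B j - C j)"
  have Teq: "T j = - (zbinom i (c - j * (m+2)) - zbinom i (F + 1 - j * (m+2)))
     + 2 * (zbinom i (c - j * (m+1)) - zbinom i (G + 1 - j * (m+1)))
     - (zbinom i (c - j * m) - zbinom i (F - j * m))" for j
    unfolding T_def A_def B_def C_def H nk c_def[symmetric] F_def[symmetric] G_def[symmetric]
    by simp
  have Tz: "T j = 0" if "j \<notin> {0, 1}" for j
  proof (cases "j \<le> -1")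
    case True
    have p: "j * (m+2) \<le> -(m+2)" "j * (m+1) \<le> -(m+1)" "j * m \<le> -m"
      using mult_right_mono[OF True, of "m+2"] mult_right_mono[OF True, of "m+1"] mult_right_mono[OF True, of m] im(2) by simp_all
    have z0: "zbinom i (c - j * (m+2)) = 0" by (rule zbinom_out) (use p im c2 F1 G1 in linarith)
    have z1: "zbinom i (F + 1 - j * (m+2)) = 0" by (rule zbinom_out) (use p im c2 F1 G1 in linarith)
    have z2: "zbinom i (c - j * (m+1)) = 0" by (rule zbinom_out) (use p im c2 F1 G1 in linarith)
    have z3: "zbinom i (G + 1 - j * (m+1)) = 0" by (rule zbinom_out) (use p im c2 F1 G1 in linarith)
    have z4: "zbinom i (c - j * m) = 0" by (rule zbinom_out) (use p im c2 F1 G1 in linarith)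
    have z5: "zbinom i (F - j * m) = 0" by (rule zbinom_out) (use p im c2 F1 G1 in linarith)
    show ?thesis unfolding Teq using z0 z1 z2 z3 z4 z5 by simp
  next
    case False
    with that have j2: "j \<ge> 2" by auto
    have pm: "j * m \<ge> 2*m"
      using mult_right_mono[OF j2, of m] im(2) by simp
    have z0: "zbinom i (c - j * (m+2)) = 0" by (intro zbinom_out disjI1, (simp only: distrib_left)?) (use pm j2 im c2 F1 G1 in linarith)
    have z1: "zbinom i (F + 1 - j * (m+2)) = 0" by (intro zbinom_out disjI1, (simp only: distrib_left)?) (use pm j2 im c2 F1 G1 in linarith)
    have z2: "zbinom i (c - j * (m+1)) = 0" by (intro zbinom_out disjI1, (simp only: distrib_left)?) (use pm j2 im c2 F1 G1 in linarith)
    have z3: "zbinom i (G + 1 - j * (m+1)) = 0" by (intro zbinom_out disjI1, (simp only: distrib_left)?) (use pm j2 im c2 F1 G1 in linarith)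
    have z4: "zbinom i (c - j * m) = 0" by (intro zbinom_out disjI1, (simp only: distrib_left)?) (use pm j2 im c2 F1 G1 in linarith)
    have z5: "zbinom i (F - j * m) = 0" by (intro zbinom_out disjI1, (simp only: distrib_left)?) (use pm j2 im c2 F1 G1 in linarith)
    show ?thesis unfolding Teq using z0 z1 z2 z3 z4 z5 by simp
  qed
  have T01: "T 0 + T 1 = zbinom (i + 1) (F + 1) + zbinom (i + 1) (F - int n + int k)
             - 2 * (zbinom i (G + 1) + zbinom i (G - int n + int k))"
  proof -
    have z: "zbinom i (c - (m+2)) = 0" "zbinom i (c - (m+1)) = 0" "zbinom i (c - m) = 0"
      using im c2 by (simp_all add: zbinom_out)
    have e: "F - int n + int k = F - m" "G - int n + int k = G - m"
      "F + 1 - (m + 2) = F - m - 1" "G + 1 - (m+1) = G - m" by (simp_all add: m_def)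
    show ?thesis unfolding e Teq using z
      by (simp add: e zbinom_pascal[simplified])
  qed
  have "((\<lambda>j. real_of_int (T j)) has_sum real_of_int (T 0 + T 1)) UNIV"
    by (rule has_sum_finite_neutralI[where B="{0,1}"]) (use Tz in auto)
  then show ?thesis unfolding T01 unfolding T_def F_def G_def .
qed

end
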